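(* Under the hypotheses of Claim 4.2 (a simple graph $G'$ on $m$ vertices whose minimum degree $\delta$ satisfies $m\cdot\frac{(2\ell-1)^2-1}{(2\ell-1)^2}+\frac{4\ell-3+q}{(2\ell-1)^2}\leq\delta$ for integers $\ell\geq2$, $q\geq1$, and a cyclic enumeration $v_0,\dots,v_{m-1}$ of its vertices), let $r\in\{1,\dots,2\ell-2\}$. Then for every set $C_1=\{v_i,\dots,v_{i+r-1}\}$ of $r$ cyclically consecutive vertices there is another set $C_2=\{v_j,\dots,v_{j+r-1}\}$ of $r$ cyclically consecutive vertices, disjoint from $C_1$, such that every vertex of $C_1$ is adjacent in $G'$ to every vertex of $C_2$.
   Context: Indices are taken modulo $m$. *)

theory Defs
  imports Complex_Main
begin

definition simple_graph :: "'a set \<Rightarrow> ('a \<Rightarrow> 'a \<Rightarrow> bool) \<Rightarrow> bool" where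
  "simple_graph V E \<longleftrightarrow> finite V \<and> (\<forall>x\<in>V. \<forall>y\<in>V. E x y \<longleftrightarrow> E y x) \<and> (\<forall>x\<in>V. \<not> E x x)"

definition degree :: "'a set \<Rightarrow> ('a \<Rightarrow> 'a \<Rightarrow> bool) \<Rightarrow> 'a \<Rightarrow> nat" where
  "degree V E x = card {y \<in> V. E x y}"

definition min_degree :: "'a set \<Rightarrow> ('a \<Rightarrow> 'a \<Rightarrow> bool) \<Rightarrow> nat" where
  "min_degree V E = Min (degree V E ` V)"

definition cyc_block :: "(nat \<Rightarrow> 'a) \<Rightarrow> nat \<Rightarrow> nat \<Rightarrow> nat \<Rightarrow> 'a set" where
  "cyc_block v m i r = (\<lambda>k. v ((i + k) mod m)) ` {0..<r}"

end

theory Submission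
  imports Defs
begin

lemma modback: assumes "j < (m::nat)" "k \<le> m" shows "((j+k) mod m + m - k) mod m = j"
proof -
  have "(j+k) mod m + m - k = (j+k) mod m + (m-k)" using assms by simp
  hence "((j+k) mod m + m - k) mod m = ((j+k) + (m-k)) mod m" by (simp add: mod_add_left_eq)
  also have "(j+k) + (m-k) = j + m" using assms by simp
  finally show ?thesis using assms by simp
qed

theorem claim4p3:
  fixes V :: "'a set" and E :: "'a \<Rightarrow> 'a \<Rightarrow> bool" and v :: "nat \<Rightarrow> 'a"
    and m l q r :: nat
  assumes graph: "simple_graph V E"
    and card_V: "card V = m"
    and enum: "bij_betw v {0..<m} V"
    and l_ge: "l \<ge> 2" and q_ge: "q \<ge> 1"
    and deg: "real m * (((2 * real l - 1)^2 - 1) / (2 * real l - 1)^2)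
              + (4 * real l - 3 + real q) / (2 * real l - 1)^2 \<le> real (min_degree V E)"
    and r_range: "1 \<le> r" "r \<le> 2 * l - 2"
  shows "\<forall>i<m. \<exists>j<m. cyc_block v m i r \<inter> cyc_block v m j r = {} \<and>
           (\<forall>x\<in>cyc_block v m i r. \<forall>y\<in>cyc_block v m j r. E x y)"
proof (intro allI impI)
  fix i assume im: "i < m"
  have finV: "finite V" using graph unfolding simple_graph_def by blast
  have irr: "\<And>x. x \<in> V \<Longrightarrow> \<not> E x x" using graph unfolding simple_graph_def by blast
  define \<delta> where "\<delta> = min_degree V E"
  define t where "t = m - \<delta>"
  define N where "N x = {y\<in>V. E x y}" for x
  have Vne: "V \<noteq> {}" using im card_V by auto
  have degge: "\<delta> \<le> degree V E x" if "x \<in> V" for x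
    unfolding \<delta>_def min_degree_def using that finV by (intro Min_le) auto
  have degle: "degree V E x \<le> m" for x
    unfolding degree_def card_V[symmetric] using finV by (intro card_mono) auto
  obtain x0 where "x0 \<in> V" using Vne by blast
  hence dm: "\<delta> \<le> m" using degge degle le_trans by blast
  have eachx: "card (V - N x) \<le> t" if "x \<in> V" for x
  proof -
    have "card (V - N x) = m - degree V E x"
      using finV card_V by (subst card_Diff_subset) (auto simp: N_def degree_def)
    thus ?thesis using degge[OF that] unfolding t_def by simp
  qed
  have vin: "v p \<in> V" if "p < m" for p using enum that bij_betwE by fastforce
  define S where "S = (2 * real l - 1)^2"
  have Spos: "S > 0" using l_ge unfolding S_def by simp
  have "(real m * (S - 1) / S + (4 * real l - 3 + real q) / S) * S \<le> real \<delta> * S"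
  proof -
    have "real m * (S - 1) / S + (4 * real l - 3 + real q) / S \<le> real \<delta>"
      using deg unfolding S_def \<delta>_def by simp
    thus ?thesis using Spos by (intro mult_right_mono) auto
  qed
  then have "real m * (S - 1) + (4 * real l - 3 + real q) \<le> real \<delta> * S"
  proof -
    have "(real m * (S - 1) / S + (4 * real l - 3 + real q) / S) * S = real m * (S - 1) + (4 * real l - 3 + real q)"
      using Spos by (simp add: distrib_right field_simps)
    thus ?thesis using \<open>(real m * (S - 1) / S + (4 * real l - 3 + real q) / S) * S \<le> real \<delta> * S\<close> by simp
  qed
  hence "real t * S < real m" using dm l_ge unfolding t_def by (simp add: of_nat_diff algebra_simps)
  moreover have "real (r*r) \<le> S"
  proof -
    have "real r \<le> 2 * real l - 1" using r_range l_ge by linarith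
    hence "real r * real r \<le> (2 * real l - 1) * (2 * real l - 1)"
      by (intro mult_mono) auto
    thus ?thesis by (simp add: power2_eq_square S_def)
  qed
  ultimately have "real (r*r) * real t < real m"
  proof -
    assume a: "real t * S < real m" "real (r*r) \<le> S"
    have "real (r*r) * real t \<le> S * real t" using a(2) by (rule mult_right_mono) simp
    thus ?thesis using a(1) by (simp add: mult.commute)
  qed
  hence rrt: "r*r*t < m" by (metis of_nat_less_iff of_nat_mult)
  have t1: "1 \<le> t"
  proof -
    have "x0 \<in> V - N x0" using \<open>x0 \<in> V\<close> irr unfolding N_def by auto
    hence "V - N x0 \<noteq> {}" by blast
    hence "1 \<le> card (V - N x0)" using finV by (simp add: Suc_le_eq card_gt_0_iff)
    thus ?thesis using eachx[OF \<open>x0 \<in> V\<close>] by linarith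
  qed
  have "r * 1 * 1 \<le> r * r * t" using r_range t1
    by (intro mult_le_mono) auto
  hence "r \<le> r * r * t" by simp
  hence rm: "r \<le> m" using rrt by linarith
  define C1 where "C1 = cyc_block v m i r"
  have C1V: "C1 \<subseteq> V" unfolding C1_def cyc_block_def using im by (auto intro!: vin)
  have cC1: "card C1 \<le> r" unfolding C1_def cyc_block_def
    using card_image_le[of "{0..<r}"] by simp
  define B where "B = (\<Union>x\<in>C1. V - N x)"
  have finC1: "finite C1" using C1V finV finite_subset by blast
  have cB: "card B \<le> r * t"
  proof -
    have "card B \<le> (\<Sum>x\<in>C1. card (V - N x))" unfolding B_def using finC1 by (rule card_UN_le)
    also have "\<dots> \<le> card C1 * t" using sum_bounded_above[of C1 "\<lambda>x. card (V - N x)" t] eachx C1V by auto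
    also have "\<dots> \<le> r * t" using cC1 by simp
    finally show ?thesis .
  qed
  have BV: "B \<subseteq> V" unfolding B_def by auto
  have C1B: "C1 \<subseteq> B" unfolding B_def N_def using C1V irr by auto
  define P where "P = {p\<in>{0..<m}. v p \<in> B}"
  have injv: "inj_on v {0..<m}" using enum bij_betw_def by blast
  have cP: "card P = card B"
  proof -
    have "v ` P = B"
    proof
      show "v ` P \<subseteq> B" unfolding P_def by auto
      show "B \<subseteq> v ` P"
      proof
        fix b assume "b \<in> B"
        then obtain p where "p \<in> {0..<m}" "v p = b" using BV enum bij_betw_imp_surj_on by blast
        thus "b \<in> v ` P" using \<open>b \<in> B\<close> unfolding P_def by auto
      qed
    qed
    moreover have "inj_on v P" using injv unfolding P_def by (rule inj_on_subset) auto
    ultimately show ?thesis using card_image by metis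
  qed
  define J where "J = {j\<in>{0..<m}. cyc_block v m j r \<inter> B \<noteq> {}}"
  have JP: "J \<subseteq> (\<lambda>(p,k). (p + m - k) mod m) ` (P \<times> {0..<r})"
  proof
    fix j assume "j \<in> J"
    then obtain k where k: "k < r" "v ((j+k) mod m) \<in> B" and jm: "j < m"
      unfolding J_def cyc_block_def by auto
    have "((j+k) mod m, k) \<in> P \<times> {0..<r}" using k im unfolding P_def by auto
    moreover have "j = ((j+k) mod m + m - k) mod m" using modback[OF jm] k rm by simp
    ultimately show "j \<in> (\<lambda>(p,k). (p + m - k) mod m) ` (P \<times> {0..<r})" by force
  qed
  have "card J \<le> card (P \<times> {0..<r})"
    using card_image_le[of "P \<times> {0..<r}"] JP
  proof -
    have "finite (P \<times> {0..<r})" unfolding P_def by simp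
    hence "card J \<le> card ((\<lambda>(p,k). (p + m - k) mod m) ` (P \<times> {0..<r}))"
      using JP by (intro card_mono) auto
    thus ?thesis using card_image_le[OF \<open>finite (P \<times> {0..<r})\<close>, of "\<lambda>(p,k). (p + m - k) mod m"] by linarith
  qed
  also have "\<dots> = card B * r" by (simp add: cP card_cartesian_product)
  also have "\<dots> \<le> r * t * r" using cB by simp
  also have "\<dots> < m" using rrt by (simp add: mult.commute mult.left_commute)
  finally have "card J < card {0..<m}" by simp
  hence "\<not> {0..<m} \<subseteq> J"
  proof (intro notI)
    assume c: "card J < card {0..<m}" and "{0..<m} \<subseteq> J"
    hence "J = {0..<m}" unfolding J_def by auto
    thus False using c by simp
  qed
  then obtain j where jm: "j < m" "j \<notin> J" by (meson atLeastLessThan_iff subsetI zero_le)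
  hence C2B: "cyc_block v m j r \<inter> B = {}" unfolding J_def by auto
  have C2V: "cyc_block v m j r \<subseteq> V" unfolding cyc_block_def using im by (auto intro!: vin)
  show "\<exists>j<m. cyc_block v m i r \<inter> cyc_block v m j r = {} \<and>
           (\<forall>x\<in>cyc_block v m i r. \<forall>y\<in>cyc_block v m j r. E x y)"
  proof (intro exI conjI)
    show "j < m" by fact
    show "cyc_block v m i r \<inter> cyc_block v m j r = {}" using C1B C2B C1_def by auto
    show "\<forall>x\<in>cyc_block v m i r. \<forall>y\<in>cyc_block v m j r. E x y"
    proof (intro ballI)
      fix x y assume x: "x \<in> cyc_block v m i r" and y: "y \<in> cyc_block v m j r"
      have "y \<notin> V - N x" using C2B y x unfolding B_def C1_def by auto
      thus "E x y" using C2V y unfolding N_def by auto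
    qed
  qed
qed

end
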